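(* Let $a, b$ be real numbers with $1 < a \leq b$, and let $$A = \bigcup_{k=0}^{\infty} \big([b^k, a b^k) \cap \mathbb{N}\big).$$ Then $A$ is fractionally dense if and only if $b \leq a^2$. Moreover, $\underline{d}(A) = \frac{a-1}{b-1}$.
   Context: $\mathbb{N} = \{1,2,3,\ldots\}$. For $A \subseteq \mathbb{N}$, the quotient set is $R(A) = \{a/a' : a, a' \in A\}$, and $A$ is called fractionally dense if the closure of $R(A)$ in $\mathbb{R}$ equals $[0,\infty)$. For $A \subseteq \mathbb{N}$ and $x>0$ let $A(x) = A \cap [1,x]$; the lower asymptotic density of $A$ is $\underline{d}(A) = \liminf_{n\to\infty} |A(n)|/n$. *)

theory Defs
  imports "HOL-Analysis.Analysis" "HOL-Library.Liminf_Limsup"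
begin

text \<open>Subsets of the positive integers are modelled as sets of naturals not containing 0.\<close>

definition quotient_set :: "nat set \<Rightarrow> real set" where
  "quotient_set A = {real x / real y | x y. x \<in> A \<and> y \<in> A}"

definition fractionally_dense :: "nat set \<Rightarrow> bool" where
  "fractionally_dense A \<longleftrightarrow> closure (quotient_set A) = {0..}"

definition lower_density :: "nat set \<Rightarrow> ereal" where
  "lower_density A = liminf (\<lambda>n. ereal (real (card (A \<inter> {1..n})) / real n))"

end

theory Submission
  imports Defs "HOL-Real_Asymp.Real_Asymp"
begin


lemma card_real_ivl:
  assumes "0 \<le> u" "u \<le> w"
  shows "w - u - 1 \<le> real (card {m::nat. u \<le> real m \<and> real m < w})"
    and "real (card {m::nat. u \<le> real m \<and> real m < w}) \<le> w - u + 1"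
proof -
  have eq: "{m::nat. u \<le> real m \<and> real m < w} = {nat \<lceil>u\<rceil>..<nat \<lceil>w\<rceil>}"
  proof (intro set_eqI iffI)
    fix m :: nat assume "m \<in> {m::nat. u \<le> real m \<and> real m < w}"
    then have "u \<le> real m" "real m < w" by auto
    then show "m \<in> {nat \<lceil>u\<rceil>..<nat \<lceil>w\<rceil>}"
    proof -
      have "\<lceil>u\<rceil> \<le> int m" using \<open>u \<le> real m\<close> by (simp add: ceiling_le_iff)
      moreover have "int m < \<lceil>w\<rceil>" using \<open>real m < w\<close> by (simp add: less_ceiling_iff)
      ultimately show ?thesis using \<open>u \<le> real m\<close> \<open>real m < w\<close> by auto
    qed
  next
    fix m :: nat assume "m \<in> {nat \<lceil>u\<rceil>..<nat \<lceil>w\<rceil>}"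
    then have h1': "nat \<lceil>u\<rceil> \<le> m" and h2': "m < nat \<lceil>w\<rceil>" by auto
    from h1' have h1: "\<lceil>u\<rceil> \<le> int m" by linarith
    from h2' have h2: "int m < \<lceil>w\<rceil>" by linarith
    from h1 have "u \<le> real m" by (simp add: ceiling_le_iff)
    moreover from h2 have "real m < w" by (simp add: less_ceiling_iff)
    ultimately show "m \<in> {m::nat. u \<le> real m \<and> real m < w}" by simp
  qed
  have c: "real (card {m::nat. u \<le> real m \<and> real m < w}) = of_int \<lceil>w\<rceil> - of_int \<lceil>u\<rceil>"
  proof -
    have "0 \<le> \<lceil>u\<rceil>" using assms by simp
    moreover have "\<lceil>u\<rceil> \<le> \<lceil>w\<rceil>" using assms by (simp add: ceiling_mono)
    ultimately have "int (nat \<lceil>w\<rceil> - nat \<lceil>u\<rceil>) = \<lceil>w\<rceil> - \<lceil>u\<rceil>" by linarith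
    then have "real (nat \<lceil>w\<rceil> - nat \<lceil>u\<rceil>) = real_of_int (\<lceil>w\<rceil> - \<lceil>u\<rceil>)"
      by (metis of_int_of_nat_eq)
    then show ?thesis unfolding eq by simp
  qed
  show "w - u - 1 \<le> real (card {m::nat. u \<le> real m \<and> real m < w})"
    unfolding c using ceiling_correct[of w] ceiling_correct[of u] by linarith
  show "real (card {m::nat. u \<le> real m \<and> real m < w}) \<le> w - u + 1"
    unfolding c using ceiling_correct[of w] ceiling_correct[of u] by linarith
qed




lemma approx_int:
  fixes a B \<beta> :: real
  assumes "1 \<le> \<beta>" "\<beta> \<le> a" "1 \<le> B" "1 \<le> (a - 1) * B"
  shows "\<exists>y::nat. B \<le> real y \<and> real y < a * B \<and> \<bar>real y - \<beta> * B\<bar> \<le> 1"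
proof -
  define y where "y = max (nat \<lceil>B\<rceil>) (nat (\<lceil>\<beta> * B\<rceil> - 1))"
  have c1: "B \<le> of_int \<lceil>B\<rceil>" "of_int \<lceil>B\<rceil> < B + 1" by linarith+
  have c2: "\<beta> * B \<le> of_int \<lceil>\<beta>*B\<rceil>" "of_int \<lceil>\<beta>*B\<rceil> < \<beta>*B + 1" by linarith+
  have bB: "B \<le> \<beta> * B" "\<beta> * B \<le> a * B" using assms by (auto intro: mult_right_mono)
  have e1: "real (nat \<lceil>B\<rceil>) = of_int \<lceil>B\<rceil>" using assms by simp
  have "0 \<le> \<lceil>\<beta> * B\<rceil> - 1" using c2 bB assms by linarith
  then have e2: "real (nat (\<lceil>\<beta> * B\<rceil> - 1)) = of_int \<lceil>\<beta>*B\<rceil> - 1" by simp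
  have ry: "real y = max (of_int \<lceil>B\<rceil>) (of_int \<lceil>\<beta>*B\<rceil> - 1)"
    unfolding y_def of_nat_max e1 e2 by simp
  have "(a - 1) * B \<ge> 1" using assms by simp
  then have aB: "B + 1 \<le> a * B" by (simp add: algebra_simps)
  have "B \<le> real y \<and> real y < a * B \<and> \<bar>real y - \<beta> * B\<bar> \<le> 1"
  proof (cases "of_int \<lceil>B\<rceil> \<le> of_int \<lceil>\<beta>*B\<rceil> - (1::real)")
    case True
    then have "real y = of_int \<lceil>\<beta>*B\<rceil> - 1" using ry by simp
    then show ?thesis using True c1 c2 bB unfolding abs_le_iff by (intro conjI; linarith)
  next
    case False
    then have "real y = of_int \<lceil>B\<rceil>" using ry by simp
    then show ?thesis using False c1 c2 bB aB unfolding abs_le_iff by (intro conjI; linarith)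
  qed
  then show ?thesis by blast
qed

lemma conv_ratio:
  fixes x B :: "nat \<Rightarrow> real" and b \<alpha> :: real
  assumes "1 < b" "\<And>j. \<bar>x j - \<alpha> * B j\<bar> \<le> 1" "\<And>j. b ^ j \<le> B j"
  shows "(\<lambda>j. x j / B j) \<longlonglongrightarrow> \<alpha>"
proof -
  have Bpos: "0 < B j" for j
  proof -
    have "0 < b ^ j" using assms(1) by simp
    then show ?thesis using assms(3)[of j] by linarith
  qed
  have bd: "norm (x j / B j - \<alpha>) \<le> (1/b) ^ j" for j
  proof -
    have "x j / B j - \<alpha> = (x j - \<alpha> * B j) / B j"
      using Bpos[of j] by (simp add: diff_divide_distrib)
    then have "\<bar>x j / B j - \<alpha>\<bar> = \<bar>x j - \<alpha> * B j\<bar> / B j"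
      using Bpos[of j] by simp
    also have "\<dots> \<le> 1 / B j" by (rule divide_right_mono[OF assms(2)[of j]]) (use Bpos[of j] in simp)
    also have "\<dots> \<le> 1 / b ^ j" 
      using divide_left_mono[OF assms(3)[of j] zero_le_one mult_pos_pos[OF Bpos[of j] zero_less_power[of b j]]] assms(1)
      by simp
    also have "\<dots> = (1/b) ^ j" by (rule power_one_over[symmetric])
    finally show ?thesis by simp
  qed
  have "(\<lambda>j. (1/b) ^ j) \<longlonglongrightarrow> 0" using assms(1) by (intro LIMSEQ_power_zero) simp
  then have "(\<lambda>j. x j / B j - \<alpha>) \<longlonglongrightarrow> 0"
    by (rule Lim_null_comparison[OF always_eventually[OF allI[OF bd]]])
  from tendsto_add[OF this tendsto_const[of \<alpha>]] show ?thesis by simp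
qed


lemma in_closure:
  fixes a b :: real and A :: "nat set"
  assumes "1 < a" and "a \<le> b"
    and A: "A = {n. 1 \<le> n \<and> (\<exists>k::nat. b ^ k \<le> real n \<and> real n < a * b ^ k)}"
    and "1 \<le> \<alpha>" "\<alpha> \<le> a" "1 \<le> \<beta>" "\<beta> \<le> a"
  shows "\<alpha> * b ^ p / (\<beta> * b ^ q) \<in> closure (quotient_set A)"
proof -
  have b1: "1 < b" using assms by linarith
  obtain J0 where J0: "1 / (a - 1) < b ^ J0" using real_arch_pow[OF b1] by blast
  have goodB: "1 \<le> b ^ (i + J0) \<and> 1 \<le> (a - 1) * b ^ (i + J0) \<and> b ^ i \<le> b ^ (i + J0)" for i
  proof -
    have "b ^ J0 \<le> b ^ (i + J0)" "b ^ i \<le> b ^ (i + J0)" using b1 by (intro power_increasing; simp)+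
    moreover have "1 \<le> b ^ (i + J0)" using b1 by simp
    moreover have "1 \<le> (a - 1) * b ^ J0" using J0 assms(1) by (simp add: field_simps)
    moreover have "(a - 1) * b ^ J0 \<le> (a - 1) * b ^ (i + J0)"
      using assms(1) \<open>b ^ J0 \<le> b ^ (i + J0)\<close> by (intro mult_left_mono) auto
    ultimately show ?thesis by linarith
  qed
  have inA: "B \<le> real y \<Longrightarrow> real y < a * B \<Longrightarrow> B = b ^ k \<Longrightarrow> y \<in> A" for B y k
  proof -
    assume h: "B \<le> real y" "real y < a * B" "B = b ^ k"
    have "1 \<le> b ^ k" using b1 by simp
    then have "1 \<le> real y" using h by linarith
    then have "1 \<le> y" by simp
    then show "y \<in> A" unfolding A using h by blast
  qed
  have "\<forall>j. \<exists>y::nat. b^(p+j+J0) \<le> real y \<and> real y < a * b^(p+j+J0) \<and> \<bar>real y - \<alpha> * b^(p+j+J0)\<bar> \<le> 1"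
  proof
    fix j
    have "1 \<le> b^(p+j+J0)" "1 \<le> (a-1)*b^(p+j+J0)" using goodB[of "p+j"] by auto
    then show "\<exists>y::nat. b^(p+j+J0) \<le> real y \<and> real y < a * b^(p+j+J0) \<and> \<bar>real y - \<alpha> * b^(p+j+J0)\<bar> \<le> 1"
      using assms by (intro approx_int) auto
  qed
  then obtain x where x: "\<And>j. b^(p+j+J0) \<le> real (x j) \<and> real (x j) < a * b^(p+j+J0) \<and> \<bar>real (x j) - \<alpha> * b^(p+j+J0)\<bar> \<le> 1"
    by metis
  have "\<forall>j. \<exists>y::nat. b^(q+j+J0) \<le> real y \<and> real y < a * b^(q+j+J0) \<and> \<bar>real y - \<beta> * b^(q+j+J0)\<bar> \<le> 1"
  proof
    fix j
    have "1 \<le> b^(q+j+J0)" "1 \<le> (a-1)*b^(q+j+J0)" using goodB[of "q+j"] by auto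
    then show "\<exists>y::nat. b^(q+j+J0) \<le> real y \<and> real y < a * b^(q+j+J0) \<and> \<bar>real y - \<beta> * b^(q+j+J0)\<bar> \<le> 1"
      using assms by (intro approx_int) auto
  qed
  then obtain y where y: "\<And>j. b^(q+j+J0) \<le> real (y j) \<and> real (y j) < a * b^(q+j+J0) \<and> \<bar>real (y j) - \<beta> * b^(q+j+J0)\<bar> \<le> 1"
    by metis
  have xA: "x j \<in> A" and yA: "y j \<in> A" for j using x[of j] y[of j] inA by blast+
  have bj1: "b ^ j \<le> b ^ (p + j + J0)" "b ^ j \<le> b ^ (q + j + J0)" for j
    using b1 by (intro power_increasing; simp)+
  have L1: "(\<lambda>j. real (x j) / b^(p+j+J0)) \<longlonglongrightarrow> \<alpha>"
    using x bj1 b1 by (intro conv_ratio[where b=b]) auto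
  have L2: "(\<lambda>j. real (y j) / b^(q+j+J0)) \<longlonglongrightarrow> \<beta>"
    using y bj1 b1 by (intro conv_ratio[where b=b]) auto
  have "(\<lambda>j. (real (x j) / b^(p+j+J0)) / (real (y j) / b^(q+j+J0)) * (b^p / b^q)) \<longlonglongrightarrow> \<alpha> / \<beta> * (b^p/b^q)"
    using assms by (intro tendsto_intros L1 L2) auto
  moreover have "(real (x j) / b^(p+j+J0)) / (real (y j) / b^(q+j+J0)) * (b^p / b^q) = real (x j) / real (y j)" for j
    using b1 by (simp add: power_add field_simps)
  ultimately have "(\<lambda>j. real (x j) / real (y j)) \<longlonglongrightarrow> \<alpha> * b ^ p / (\<beta> * b ^ q)" by simp
  moreover have "real (x j) / real (y j) \<in> quotient_set A" for j
    unfolding quotient_set_def using xA yA by blast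
  ultimately show ?thesis unfolding closure_sequential
    by (intro exI[of _ "\<lambda>j. real (x j) / real (y j)"]) auto
qed




lemma pow_ivl:
  fixes b t :: real assumes "1 < b" "1 \<le> t"
  shows "\<exists>n. b ^ n \<le> t \<and> t < b ^ Suc n"
proof -
  obtain N where N: "t < b ^ N" using real_arch_pow[OF assms(1)] by blast
  have "\<forall>t. 1 \<le> t \<and> t < b ^ N \<longrightarrow> (\<exists>n. b ^ n \<le> t \<and> t < b ^ Suc n)"
  proof (induction N)
    case 0 then show ?case by auto
  next
    case (Suc N)
    show ?case
    proof (intro allI impI)
      fix t assume h: "1 \<le> t \<and> t < b ^ Suc N"
      show "\<exists>n. b ^ n \<le> t \<and> t < b ^ Suc n"
      proof (cases "t < b ^ N")
        case True then show ?thesis using Suc.IH h by blast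
      next
        case False then show ?thesis using h by (intro exI[of _ N]) auto
      qed
    qed
  qed
  then show ?thesis using N assms by blast
qed

lemma fd_iff:
  fixes a b :: real and A :: "nat set"
  assumes a1: "1 < a" and ab: "a \<le> b"
    and A: "A = {n. 1 \<le> n \<and> (\<exists>k::nat. b ^ k \<le> real n \<and> real n < a * b ^ k)}"
  shows "fractionally_dense A \<longleftrightarrow> b \<le> a\<^sup>2"
proof
  have b1: "1 < b" using assms by linarith
  assume fd: "fractionally_dense A"
  show "b \<le> a\<^sup>2"
  proof (rule ccontr)
    assume "\<not> b \<le> a\<^sup>2"
    then have ba: "a * a < b" by (simp add: power2_eq_square)
    then have aba: "a < b / a" using a1 by (simp add: field_simps)
    define F where "F = {..a} \<union> {b/a..}"
    have "closed F" unfolding F_def by (intro closed_Un closed_atMost closed_atLeast)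
    have QF: "quotient_set A \<subseteq> F"
    proof
      fix q assume "q \<in> quotient_set A"
      then obtain x y where q: "q = real x / real y" and "x \<in> A" "y \<in> A"
        unfolding quotient_set_def by blast
      then obtain k j where x: "b^k \<le> real x" "real x < a * b^k"
        and y: "b^j \<le> real y" "real y < a * b^j" unfolding A by blast
      have "1 \<le> b ^ j" using b1 by simp
      then have ypos: "0 < real y" using y(1) by linarith
      show "q \<in> F"
      proof (cases "k \<le> j")
        case True
        then have "b^k \<le> b^j" using b1 by (intro power_increasing) auto
        then have "b^k \<le> real y" using y(1) by linarith
        then have "a * b^k \<le> a * real y" using a1 by (intro mult_left_mono) auto
        then have "real x < a * real y" using x(2) by linarith
        then have "q < a" using ypos unfolding q by (simp add: field_simps)
        then show ?thesis unfolding F_def by auto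
      next
        case False
        then have "b^Suc j \<le> b^k" using b1 by (intro power_increasing) auto
        then have "b * b^j \<le> real x" using x by simp
        moreover have "b * real y < b * (a * b^j)" using y b1 by simp
        ultimately have h1: "a * (b * b^j) \<le> a * real x" and h2: "b * real y < b * (a * b^j)"
          using a1 by (auto intro: mult_left_mono)
        have "b * (a * b^j) = a * (b * b^j)" by simp
        then have "b * real y < a * real x" using h1 h2 by linarith
        then have "b / a < q" using ypos a1 unfolding q by (simp add: field_simps)
        then show ?thesis unfolding F_def by auto
      qed
    qed
    have "closure (quotient_set A) \<subseteq> F" using QF \<open>closed F\<close> by (rule closure_minimal)
    moreover obtain c where c: "c = b / a" by blast
    define t0 where "t0 = (a + c) / 2"
    have ac: "a < c" using aba c by simp
    have "a < t0" unfolding t0_def using ac by (simp add: field_simps)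
    have "t0 < c" unfolding t0_def using ac by (simp add: field_simps)
    then have "t0 < b / a" using c by simp
    then have "t0 \<in> {0..}" "t0 \<notin> F" unfolding F_def using a1 \<open>a < t0\<close> by auto
    ultimately show False using fd unfolding fractionally_dense_def by blast
  qed
next
  have b1: "1 < b" using assms by linarith
  assume ba: "b \<le> a\<^sup>2"
  then have baa: "b / a \<le> a" using a1 by (simp add: field_simps power2_eq_square)
  let ?C = "closure (quotient_set A)"
  have C: "1 \<le> \<alpha> \<Longrightarrow> \<alpha> \<le> a \<Longrightarrow> 1 \<le> \<beta> \<Longrightarrow> \<beta> \<le> a \<Longrightarrow> \<alpha> * b ^ p / (\<beta> * b ^ q) \<in> ?C" for \<alpha> \<beta> p q
    by (rule in_closure[OF a1 ab A])
  have ge1: "t \<in> ?C \<and> 1 / t \<in> ?C" if t1: "1 \<le> t" for t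
  proof -
    obtain n where n: "b ^ n \<le> t" "t < b ^ Suc n" using pow_ivl[OF b1 t1] by blast
    have bn: "0 < b ^ n" using b1 by simp
    define s where "s = t / b ^ n"
    have s1: "1 \<le> s" "s < b" using n bn unfolding s_def by (auto simp: field_simps)
    have ts: "t = s * b ^ n" unfolding s_def using bn b1 by simp
    show ?thesis
    proof (cases "s \<le> a")
      case True
      have "s * b ^ n / (1 * b ^ 0) \<in> ?C" using True s1 a1 by (intro C) auto
      moreover have "1 * b ^ 0 / (s * b ^ n) \<in> ?C" using True s1 a1 by (intro C) auto
      ultimately show ?thesis using ts by simp
    next
      case False
      define \<beta> where "\<beta> = b / s"
      have "b / s \<le> b / a" using False a1 b1 by (intro divide_left_mono) auto
      then have b2: "\<beta> \<le> a" unfolding \<beta>_def using baa by linarith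
      have "1 \<le> \<beta>" unfolding \<beta>_def using s1 by (simp add: field_simps)
      note \<beta> = this b2
      have e: "t = 1 * b ^ Suc n / (\<beta> * b ^ 0)" unfolding \<beta>_def ts using s1 by (simp add: field_simps)
      have "1 * b ^ Suc n / (\<beta> * b ^ 0) \<in> ?C" using \<beta> a1 by (intro C) auto
      moreover have "\<beta> * b ^ 0 / (1 * b ^ Suc n) \<in> ?C" using \<beta> a1 by (intro C) auto
      ultimately show ?thesis using e by simp
    qed
  qed
  have pos: "t \<in> ?C" if "0 < t" for t
  proof (cases "1 \<le> t")
    case True then show ?thesis using ge1 by blast
  next
    case False
    then have "1 \<le> 1 / t" using that by (simp add: field_simps)
    then show ?thesis using ge1[of "1/t"] by simp
  qed
  have "{0<..} \<subseteq> ?C" using pos by auto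
  then have "closure {0<..} \<subseteq> ?C" by (intro closure_minimal) auto
  then have sub: "{0..} \<subseteq> ?C" by simp
  have "quotient_set A \<subseteq> {0..}" unfolding quotient_set_def by auto
  then have "?C \<subseteq> {0..}" by (intro closure_minimal) auto
  then show "fractionally_dense A" unfolding fractionally_dense_def using sub by blast
qed




definition blk :: "real \<Rightarrow> real \<Rightarrow> nat \<Rightarrow> nat set" where
  "blk a b k = {m::nat. b ^ k \<le> real m \<and> real m < a * b ^ k}"

context
  fixes a b :: real
  assumes a1: "1 < a" and ab: "a \<le> b"
begin

lemma b1: "1 < b" using a1 ab by linarith

lemma blk_disj:
  assumes "j < k" shows "blk a b j \<inter> blk a b k = {}"
proof -
  have "b ^ Suc j \<le> b ^ k" using b1 assms by (intro power_increasing) auto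
  moreover have "a * b ^ j \<le> b * b ^ j" using ab b1 by (intro mult_right_mono) auto
  ultimately have "a * b ^ j \<le> b ^ k" by simp
  then show ?thesis unfolding blk_def by auto
qed

lemma blk_disj': "j \<noteq> k \<Longrightarrow> blk a b j \<inter> blk a b k = {}"
  using blk_disj[of j k] blk_disj[of k j] by (cases "j < k") auto

lemma blk_finite: "finite (blk a b k)"
proof (rule finite_subset)
  show "blk a b k \<subseteq> {..nat \<lceil>a * b ^ k\<rceil>}"
  proof
    fix m assume "m \<in> blk a b k"
    then have "real m < a * b ^ k" unfolding blk_def by auto
    then have "int m < \<lceil>a * b ^ k\<rceil>" by (simp add: less_ceiling_iff)
    then show "m \<in> {..nat \<lceil>a * b ^ k\<rceil>}" by auto
  qed
qed auto

lemma blk_card_le: "real (card (blk a b k)) \<le> (a - 1) * b ^ k + 1"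
proof -
  have "0 \<le> b ^ k" using b1 by simp
  moreover have "b ^ k \<le> a * b ^ k" using a1 b1 by simp
  ultimately have "real (card {m::nat. b ^ k \<le> real m \<and> real m < a * b ^ k}) \<le> a * b ^ k - b ^ k + 1"
    by (rule card_real_ivl(2))
  then show ?thesis unfolding blk_def by (simp add: algebra_simps)
qed

lemma L_props: "0 \<le> (a - 1) / (b - 1)" "(a - 1) / (b - 1) \<le> 1" "(a - 1) / (b - 1) * (b - 1) = a - 1"
  using a1 ab b1 by (auto simp: field_simps)

lemma blk_card_ge:
  fixes n :: nat
  shows "(a - 1) / (b - 1) * (min (real n) (b ^ Suc k) - min (real n) (b ^ k)) - (if b ^ k \<le> real n then 1 else 0)
          \<le> real (card (blk a b k \<inter> {..n}))"
proof (cases "b ^ k \<le> real n")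
  case False
  have "b ^ k \<le> b ^ Suc k" using b1 by (intro power_increasing) auto
  then have "real n \<le> b ^ Suc k" using False by linarith
  then have "min (real n) (b ^ Suc k) = real n" "min (real n) (b ^ k) = real n"
    using False by (simp_all add: min_absorb1)
  then show ?thesis using False by simp
next
  case True
  define L where "L = (a - 1) / (b - 1)"
  have L: "0 \<le> L" "L \<le> 1" "L * (b - 1) = a - 1" using L_props unfolding L_def by auto
  define w where "w = min (a * b ^ k) (real n + 1)"
  have eq: "blk a b k \<inter> {..n} = {m::nat. b ^ k \<le> real m \<and> real m < w}"
    unfolding blk_def w_def by auto
  have "0 \<le> b ^ k" using b1 by simp
  moreover have bw: "b ^ k \<le> w" unfolding w_def using True a1 b1 by simp
  ultimately have c: "w - b ^ k - 1 \<le> real (card (blk a b k \<inter> {..n}))"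
    unfolding eq by (rule card_real_ivl(1))
  have mk: "min (real n) (b ^ k) = b ^ k" using True by simp
  have key: "L * (min (real n) (b ^ Suc k) - b ^ k) \<le> w - b ^ k"
  proof (cases "a * b ^ k \<le> real n + 1")
    case True
    then have "w = a * b ^ k" unfolding w_def by simp
    then have "w - b ^ k = (a - 1) * b ^ k" by (simp add: algebra_simps)
    also have "\<dots> = L * (b - 1) * b ^ k" using L(3) by simp
    also have "\<dots> = L * (b ^ Suc k - b ^ k)" by (simp add: algebra_simps)
    finally have "w - b ^ k = L * (b ^ Suc k - b ^ k)" .
    moreover have "L * (min (real n) (b ^ Suc k) - b ^ k) \<le> L * (b ^ Suc k - b ^ k)"
      using L(1) by (intro mult_left_mono) auto
    ultimately show ?thesis by linarith
  next
    case False
    then have w: "w = real n + 1" unfolding w_def by simp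
    have "L * (min (real n) (b ^ Suc k) - b ^ k) \<le> L * (real n - b ^ k)"
      using L(1) by (intro mult_left_mono) auto
    also have "\<dots> \<le> 1 * (real n - b ^ k)"
      using L(2) \<open>b ^ k \<le> real n\<close> by (intro mult_right_mono) auto
    finally show ?thesis using w by simp
  qed
  show ?thesis using c key True unfolding mk L_def[symmetric] by simp
qed

end




lemma count_lower:
  fixes a b :: real and A :: "nat set" and n :: nat
  assumes a1: "1 < a" and ab: "a \<le> b"
    and A: "A = {n. 1 \<le> n \<and> (\<exists>k::nat. b ^ k \<le> real n \<and> real n < a * b ^ k)}"
    and n1: "1 \<le> n"
  shows "(a - 1) / (b - 1) * (real n - 1) - ln (real n) / ln b - 1 \<le> real (card (A \<inter> {1..n}))"
proof -
  have b1: "1 < b" using a1 ab by linarith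
  define L where "L = (a - 1) / (b - 1)"
  obtain M where M: "real n < b ^ M" using real_arch_pow[OF b1] by blast
  define U where "U = (\<Union>k\<in>{..<M}. blk a b k \<inter> {..n})"
  have "U \<subseteq> A \<inter> {1..n}"
  proof
    fix m assume "m \<in> U"
    then obtain k where k: "b ^ k \<le> real m" "real m < a * b ^ k" "m \<le> n"
      unfolding U_def blk_def by auto
    have "1 \<le> b ^ k" using b1 by simp
    then have "1 \<le> m" using k by simp
    then show "m \<in> A \<inter> {1..n}" unfolding A using k by auto
  qed
  then have "card U \<le> card (A \<inter> {1..n})" by (intro card_mono) auto
  moreover have "card U = (\<Sum>k<M. card (blk a b k \<inter> {..n}))"
    unfolding U_def using blk_finite[OF a1 ab] blk_disj'[OF a1 ab]
    by (intro card_UN_disjoint) auto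
  ultimately have c1: "(\<Sum>k<M. real (card (blk a b k \<inter> {..n}))) \<le> real (card (A \<inter> {1..n}))"
    by (metis of_nat_le_iff of_nat_sum)
  define \<phi> where "\<phi> k = min (real n) (b ^ k)" for k
  define e where "e k = (if b ^ k \<le> real n then 1 else (0::real))" for k
  have "(\<Sum>k<M. L * (\<phi> (Suc k) - \<phi> k) - e k) \<le> (\<Sum>k<M. real (card (blk a b k \<inter> {..n})))"
    by (intro sum_mono) (use blk_card_ge[OF a1 ab] in \<open>simp add: L_def \<phi>_def e_def\<close>)
  moreover have phis: "\<phi> M = real n" "\<phi> 0 = 1" unfolding \<phi>_def using M n1 by auto
  moreover have "(\<Sum>k<M. L * (\<phi> (Suc k) - \<phi> k) - e k) = L * (real n - 1) - (\<Sum>k<M. e k)"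
  proof -
    have "(\<Sum>k<M. L * (\<phi> (Suc k) - \<phi> k) - e k) = (\<Sum>k<M. L * (\<phi> (Suc k) - \<phi> k)) - (\<Sum>k<M. e k)"
      by (rule sum_subtractf)
    also have "(\<Sum>k<M. L * (\<phi> (Suc k) - \<phi> k)) = L * (\<Sum>k<M. \<phi> (Suc k) - \<phi> k)"
      by (rule sum_distrib_left[symmetric])
    also have "(\<Sum>k<M. \<phi> (Suc k) - \<phi> k) = \<phi> M - \<phi> 0" by (rule sum_lessThan_telescope)
    finally show ?thesis using phis by simp
  qed
  ultimately have c2: "L * (real n - 1) - (\<Sum>k<M. e k) \<le> real (card (A \<inter> {1..n}))"
    using c1 by linarith
  define N where "N = nat \<lfloor>ln (real n) / ln b\<rfloor>"
  have lnb: "0 < ln b" using b1 by simp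
  have lnn: "0 \<le> ln (real n)" using n1 by simp
  have "(\<Sum>k<M. e k) = (\<Sum>k\<in>{k\<in>{..<M}. b ^ k \<le> real n}. 1)"
    unfolding e_def by (rule sum.inter_filter[symmetric]) simp
  also have "\<dots> = real (card {k\<in>{..<M}. b ^ k \<le> real n})" by simp
  also have "\<dots> \<le> real (card {..N})"
  proof -
    have "{k\<in>{..<M}. b ^ k \<le> real n} \<subseteq> {..N}"
    proof
      fix k assume "k \<in> {k\<in>{..<M}. b ^ k \<le> real n}"
      then have "b ^ k \<le> real n" by simp
      then have "ln (b ^ k) \<le> ln (real n)" using b1 n1 by (subst ln_le_cancel_iff) auto
      then have "real k * ln b \<le> ln (real n)" using b1 by (simp add: ln_realpow)
      then have "real k \<le> ln (real n) / ln b" using lnb by (simp add: field_simps)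
      then have "int k \<le> \<lfloor>ln (real n) / ln b\<rfloor>" by (simp add: le_floor_iff)
      then show "k \<in> {..N}" unfolding N_def by auto
    qed
    then show ?thesis by (intro of_nat_mono card_mono) auto
  qed
  also have "\<dots> = real N + 1" by simp
  also have "\<dots> \<le> ln (real n) / ln b + 1"
  proof -
    have "0 \<le> ln (real n) / ln b" using lnb lnn by simp
    then have "real N = of_int \<lfloor>ln (real n) / ln b\<rfloor>" unfolding N_def by simp
    then show ?thesis by linarith
  qed
  finally show ?thesis using c2 unfolding L_def by linarith
qed

lemma count_upper:
  fixes a b :: real and A :: "nat set" and K :: nat
  assumes a1: "1 < a" and ab: "a \<le> b"
    and A: "A = {n. 1 \<le> n \<and> (\<exists>k::nat. b ^ k \<le> real n \<and> real n < a * b ^ k)}"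
  shows "real (card (A \<inter> {1..nat \<lceil>b ^ K\<rceil> - 1})) \<le> (a - 1) / (b - 1) * (b ^ K - 1) + real K"
proof -
  have b1: "1 < b" using a1 ab by linarith
  define n where "n = nat \<lceil>b ^ K\<rceil> - 1"
  have "real n < b ^ K"
  proof -
    have "1 \<le> b ^ K" using b1 by simp
    then have "1 \<le> \<lceil>b ^ K\<rceil>" by linarith
    then have "int n = \<lceil>b ^ K\<rceil> - 1" unfolding n_def by linarith
    then have "real n = of_int (\<lceil>b ^ K\<rceil> - 1)" by (metis of_int_of_nat_eq)
    then have "real n = of_int \<lceil>b ^ K\<rceil> - 1" by simp
    then show ?thesis by linarith
  qed
  have sub: "A \<inter> {1..n} \<subseteq> (\<Union>k\<in>{..<K}. blk a b k)"
  proof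
    fix m assume "m \<in> A \<inter> {1..n}"
    then obtain k where k: "b ^ k \<le> real m" "real m < a * b ^ k" "m \<le> n" unfolding A by auto
    have "k < K"
    proof (rule ccontr)
      assume "\<not> k < K"
      then have "b ^ K \<le> b ^ k" using b1 by (intro power_increasing) auto
      moreover have "real m \<le> real n" using k by simp
      ultimately show False using k \<open>real n < b ^ K\<close> by linarith
    qed
    then show "m \<in> (\<Union>k\<in>{..<K}. blk a b k)" unfolding blk_def using k by auto
  qed
  have "card (A \<inter> {1..n}) \<le> card (\<Union>k\<in>{..<K}. blk a b k)"
    using sub blk_finite[OF a1 ab] by (intro card_mono) auto
  also have "\<dots> \<le> (\<Sum>k<K. card (blk a b k))" by (rule card_UN_le) simp
  finally have "real (card (A \<inter> {1..n})) \<le> (\<Sum>k<K. real (card (blk a b k)))"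
    by (metis of_nat_le_iff of_nat_sum)
  also have "\<dots> \<le> (\<Sum>k<K. (a - 1) * b ^ k + 1)"
    by (intro sum_mono blk_card_le[OF a1 ab])
  also have "\<dots> = (a - 1) * (\<Sum>k<K. b ^ k) + real K"
    by (simp add: sum.distrib sum_distrib_left)
  also have "\<dots> = (a - 1) / (b - 1) * (b ^ K - 1) + real K"
    using b1 by (simp add: geometric_sum)
  finally show ?thesis unfolding n_def .
qed




lemma density:
  fixes a b :: real and A :: "nat set"
  assumes a1: "1 < a" and ab: "a \<le> b"
    and A: "A = {n. 1 \<le> n \<and> (\<exists>k::nat. b ^ k \<le> real n \<and> real n < a * b ^ k)}"
  shows "lower_density A = ereal ((a - 1) / (b - 1))"
proof -
  have b1: "1 < b" using a1 ab by linarith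
  define L where "L = (a - 1) / (b - 1)"
  have L0: "0 \<le> L" unfolding L_def using a1 b1 by simp
  define f where "f n = real (card (A \<inter> {1..n})) / real n" for n :: nat
  have ld: "lower_density A = liminf (\<lambda>n. ereal (f n))"
    unfolding lower_density_def f_def ..
  define g where "g n = (L * (real n - 1) - ln (real n) / ln b - 1) / real n" for n :: nat
  have gf: "g n \<le> f n" if "1 \<le> n" for n
    unfolding g_def f_def L_def
    by (rule divide_right_mono[OF count_lower[OF a1 ab A that]]) simp
  have l1: "(\<lambda>n. ln (real n) / real n) \<longlonglongrightarrow> 0" by real_asymp
  have l2: "(\<lambda>n. 1 / real n) \<longlonglongrightarrow> 0" by real_asymp
  have "(\<lambda>n. L - L * (1 / real n) - (1 / ln b) * (ln (real n) / real n) - 1 / real n)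
          \<longlonglongrightarrow> L - L * 0 - (1 / ln b) * 0 - 0"
    by (intro tendsto_intros l1 l2)
  then have h: "(\<lambda>n. L - L * (1 / real n) - (1 / ln b) * (ln (real n) / real n) - 1 / real n) \<longlonglongrightarrow> L"
    by simp
  have "eventually (\<lambda>n. L - L * (1 / real n) - (1 / ln b) * (ln (real n) / real n) - 1 / real n = g n) sequentially"
    unfolding eventually_sequentially
    by (intro exI[of _ 1] allI impI) (simp add: g_def field_simps)
  then have gL: "g \<longlonglongrightarrow> L" using h by (rule Lim_transform_eventually[rotated])
  have lower: "ereal L \<le> lower_density A"
  proof -
    have "liminf (\<lambda>n. ereal (g n)) = ereal L"
      by (intro lim_imp_Liminf) (simp_all add: gL)
    moreover have "liminf (\<lambda>n. ereal (g n)) \<le> liminf (\<lambda>n. ereal (f n))"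
      by (intro Liminf_mono) (use gf in \<open>auto simp: eventually_sequentially intro!: exI[of _ 1]\<close>)
    ultimately show ?thesis using ld by simp
  qed
  have upper: "lower_density A \<le> ereal L"
  proof (rule ccontr)
    assume "\<not> lower_density A \<le> ereal L"
    then have lt: "ereal L < lower_density A" by simp
    then obtain z where z: "ereal L < z" "z < lower_density A" using dense by blast
    then obtain r where zr: "z = ereal r" by (cases z) auto
    have "\<forall>y < lower_density A. eventually (\<lambda>n. y < ereal (f n)) sequentially"
      using le_Liminf_iff[THEN iffD1, OF order_refl[of "liminf (\<lambda>n. ereal (f n))"]] ld by simp
    then have "eventually (\<lambda>n. ereal r < ereal (f n)) sequentially" using z zr by blast
    then obtain N where N: "\<And>n. n \<ge> N \<Longrightarrow> r < f n" unfolding eventually_sequentially by auto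
    have rL: "L < r" using z zr by simp
    have "(\<lambda>K. real K / b ^ K) \<longlonglongrightarrow> 0" using b1 by (intro lim_n_over_pown) simp
    then have ev1: "eventually (\<lambda>K. real K / b ^ K < (r - L) / 2) sequentially"
      using rL by (intro order_tendstoD(2)) auto
    obtain K0 where K0: "real N + 2 < b ^ K0" using real_arch_pow[OF b1] by blast
    have ev2: "eventually (\<lambda>K. real N + 2 < b ^ K) sequentially"
      unfolding eventually_sequentially
    proof (intro exI[of _ K0] allI impI)
      fix K assume "K0 \<le> K"
      then have "b ^ K0 \<le> b ^ K" using b1 by (intro power_increasing) auto
      then show "real N + 2 < b ^ K" using K0 by linarith
    qed
    from eventually_conj[OF ev1 ev2] obtain K where
      K: "real K / b ^ K < (r - L) / 2" "real N + 2 < b ^ K"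
      unfolding eventually_sequentially by auto
    define n where "n = nat \<lceil>b ^ K\<rceil> - 1"
    have rn: "real n \<ge> b ^ K - 1"
    proof -
      have "1 \<le> b ^ K" using b1 by simp
      then have "1 \<le> \<lceil>b ^ K\<rceil>" by linarith
      then have "int n = \<lceil>b ^ K\<rceil> - 1" unfolding n_def by linarith
      then have "real n = of_int (\<lceil>b ^ K\<rceil> - 1)" by (metis of_int_of_nat_eq)
      then show ?thesis by linarith
    qed
    have "real N \<le> real n" using rn K(2) by linarith
    then have "r < f n" using N by simp
    have bK: "0 < b ^ K - 1" using K(2) by linarith
    have cu: "real (card (A \<inter> {1..n})) \<le> L * (b ^ K - 1) + real K"
      using count_upper[OF a1 ab A, of K] unfolding n_def L_def .
    have "f n \<le> (L * (b ^ K - 1) + real K) / real n"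
      unfolding f_def using rn bK by (intro divide_right_mono cu) auto
    also have "\<dots> \<le> (L * (b ^ K - 1) + real K) / (b ^ K - 1)"
      using rn bK L0 by (intro divide_left_mono) auto
    also have "\<dots> = L + real K / (b ^ K - 1)" using bK by (simp add: field_simps)
    finally have fn: "f n \<le> L + real K / (b ^ K - 1)" .
    have "real K / (b ^ K - 1) \<le> real K / (b ^ K / 2)"
      using bK K(2) by (intro divide_left_mono) auto
    also have "real K / (b ^ K / 2) = 2 * (real K / b ^ K)" by simp
    finally have x2: "real K / (b ^ K - 1) \<le> 2 * (real K / b ^ K)" .
    have K1a: "2 * (real K / b ^ K) < 2 * ((r - L) / 2)" using K(1) by (intro mult_strict_left_mono) auto
    have K1: "2 * (real K / b ^ K) < r - L" using K1a by simp
    have aux: "u \<le> L + x \<Longrightarrow> x \<le> z \<Longrightarrow> z < r - L \<Longrightarrow> u < r" for u x z :: real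
      by linarith
    have "f n < r" by (rule aux[OF fn x2 K1])
    then show False using \<open>r < f n\<close> by simp
  qed
  show ?thesis using lower upper unfolding L_def by simp
qed


theorem proposition1:
  fixes a b :: real and A :: "nat set"
  assumes "1 < a" and "a \<le> b"
    and "A = {n. 1 \<le> n \<and> (\<exists>k::nat. b ^ k \<le> real n \<and> real n < a * b ^ k)}"
  shows "(fractionally_dense A \<longleftrightarrow> b \<le> a\<^sup>2) \<and> lower_density A = ereal ((a - 1) / (b - 1))"
  using fd_iff[OF assms] density[OF assms] by blast

end
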